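(* If $\mathbf X=(X,\mu,T)$ is a nontrivial weak mixing measure preserving system, $S$ is a set of rigidity for $\mathbf X$, and $m\in\mathbb Z\setminus\{0\}$, then $S+m$ is not a set of strong recurrence for $\mathbf X$.
   Context: A measure preserving system is a probability space $(X,\mu)$ with an invertible measure preserving map $T$. $S\subseteq\mathbb Z$ is a set of rigidity for $\mathbf X$ if $S$ is infinite and for all measurable $D\subseteq X$ and $\varepsilon>0$, $\{n\in S:\mu(D\triangle T^nD)>\varepsilon\}$ is finite. $S'\subseteq\mathbb Z$ is a set of strong recurrence for $\mathbf X$ if for every measurable $D$ with $\mu(D)>0$ there is $c>0$ such that $\{n\in S':\mu(D\cap T^nD)>c\}$ is infinite. *)

theory Defs
  imports "HOL-Probability.Probability"
begin

definition inv_mps :: "'a measure \<Rightarrow> ('a \<Rightarrow> 'a) \<Rightarrow> bool" where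
  "inv_mps M T \<longleftrightarrow> prob_space M \<and> T \<in> M \<rightarrow>\<^sub>M M
     \<and> bij_betw T (space M) (space M)
     \<and> the_inv_into (space M) T \<in> M \<rightarrow>\<^sub>M M
     \<and> (\<forall>A\<in>sets M. measure M (T -` A \<inter> space M) = measure M A)"

definition Tpow :: "'a measure \<Rightarrow> ('a \<Rightarrow> 'a) \<Rightarrow> int \<Rightarrow> 'a \<Rightarrow> 'a" where
  "Tpow M T n = (if 0 \<le> n then T ^^ nat n else (the_inv_into (space M) T) ^^ nat (- n))"

definition Tset :: "'a measure \<Rightarrow> ('a \<Rightarrow> 'a) \<Rightarrow> int \<Rightarrow> 'a set \<Rightarrow> 'a set" where
  "Tset M T n D = Tpow M T n ` D"

definition weak_mixing :: "'a measure \<Rightarrow> ('a \<Rightarrow> 'a) \<Rightarrow> bool" where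
  "weak_mixing M T \<longleftrightarrow> (\<forall>A\<in>sets M. \<forall>B\<in>sets M.
     (\<lambda>N. (\<Sum>n<N. \<bar>measure M (A \<inter> ((T ^^ n) -` B \<inter> space M)) - measure M A * measure M B\<bar>) / real N)
       \<longlonglongrightarrow> 0)"

definition nontrivial_sys :: "'a measure \<Rightarrow> bool" where
  "nontrivial_sys M \<longleftrightarrow> (\<exists>A\<in>sets M. 0 < measure M A \<and> measure M A < 1)"

definition set_of_rigidity :: "'a measure \<Rightarrow> ('a \<Rightarrow> 'a) \<Rightarrow> int set \<Rightarrow> bool" where
  "set_of_rigidity M T S \<longleftrightarrow> infinite S \<and>
     (\<forall>D\<in>sets M. \<forall>\<epsilon>>0. finite {n\<in>S. measure M (D - Tset M T n D \<union> (Tset M T n D - D)) > \<epsilon>})"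

definition set_of_strong_recurrence :: "'a measure \<Rightarrow> ('a \<Rightarrow> 'a) \<Rightarrow> int set \<Rightarrow> bool" where
  "set_of_strong_recurrence M T S' \<longleftrightarrow>
     (\<forall>D\<in>sets M. measure M D > 0 \<longrightarrow>
        (\<exists>c>0. infinite {n\<in>S'. measure M (D \<inter> Tset M T n D) > c}))"

end

theory Submission
  imports Defs
begin


lemma funpow_space: "(\<And>x. x \<in> S \<Longrightarrow> f x \<in> S) \<Longrightarrow> x \<in> S \<Longrightarrow> (f ^^ n) x \<in> S"
  by (induction n) auto

lemma funpow_meas: "f \<in> M \<rightarrow>\<^sub>M M \<Longrightarrow> (f ^^ n) \<in> M \<rightarrow>\<^sub>M M"
  by (induction n) (auto intro: measurable_comp)

lemma funpow_pres:
  assumes f: "f \<in> M \<rightarrow>\<^sub>M M" and p: "\<forall>A\<in>sets M. measure M (f -` A \<inter> space M) = measure M A"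
  shows "A \<in> sets M \<Longrightarrow> measure M ((f ^^ n) -` A \<inter> space M) = measure M A"
proof (induction n)
  case 0 then show ?case using sets.sets_into_space by (simp add: Int_absorb2)
next
  case (Suc n)
  have sp: "\<And>x. x \<in> space M \<Longrightarrow> f x \<in> space M" using f by (meson measurable_space)
  have eq: "(f ^^ Suc n) -` A \<inter> space M = f -` ((f ^^ n) -` A \<inter> space M) \<inter> space M"
    using sp by (auto simp: funpow_swap1)
  have S: "(f ^^ n) -` A \<inter> space M \<in> sets M" using funpow_meas[OF f] Suc.prems
    by (meson measurable_sets)
  have "measure M ((f ^^ Suc n) -` A \<inter> space M) = measure M (f -` ((f ^^ n) -` A \<inter> space M) \<inter> space M)"
    by (simp only: eq)
  also have "\<dots> = measure M ((f ^^ n) -` A \<inter> space M)" using p S by blast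
  finally show ?case using Suc.IH[OF Suc.prems] by linarith
qed

locale imps = fixes M :: "'a measure" and T assumes imps: "inv_mps M T"
begin
abbreviation "U \<equiv> the_inv_into (space M) T"
lemma probM: "prob_space M" and Tm: "T \<in> M \<rightarrow>\<^sub>M M" and bij: "bij_betw T (space M) (space M)"
  and Um: "U \<in> M \<rightarrow>\<^sub>M M" and Tpres: "\<forall>A\<in>sets M. measure M (T -` A \<inter> space M) = measure M A"
  using imps unfolding inv_mps_def by auto

lemma T_space: "x \<in> space M \<Longrightarrow> T x \<in> space M" using Tm by (meson measurable_space)
lemma U_space: "x \<in> space M \<Longrightarrow> U x \<in> space M" using Um by (meson measurable_space)
lemma UT: "x \<in> space M \<Longrightarrow> U (T x) = x"
  using bij by (simp add: bij_betw_imp_inj_on the_inv_into_f_f)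
lemma TU: "x \<in> space M \<Longrightarrow> T (U x) = x"
  using bij by (metis bij_betw_imp_surj_on f_the_inv_into_f bij_betw_imp_inj_on)

lemma Upres: "\<forall>A\<in>sets M. measure M (U -` A \<inter> space M) = measure M A"
proof
  fix A assume A: "A \<in> sets M"
  define B where "B = U -` A \<inter> space M"
  have B: "B \<in> sets M" using A Um unfolding B_def by (meson measurable_sets)
  have "T -` B \<inter> space M = A" using UT T_space sets.sets_into_space[OF A] unfolding B_def by auto
  then show "measure M (U -` A \<inter> space M) = measure M A" using Tpres B unfolding B_def by metis
qed

lemma Tpow_space: "x \<in> space M \<Longrightarrow> Tpow M T k x \<in> space M"
  unfolding Tpow_def using funpow_space[of "space M" T] funpow_space[of "space M" U] T_space U_space
  by auto

lemma Tpow_meas: "Tpow M T k \<in> M \<rightarrow>\<^sub>M M"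
  unfolding Tpow_def using funpow_meas[OF Tm] funpow_meas[OF Um] by auto

lemma Tpow_pres: "A \<in> sets M \<Longrightarrow> measure M (Tpow M T k -` A \<inter> space M) = measure M A"
  unfolding Tpow_def using funpow_pres[OF Tm Tpres] funpow_pres[OF Um Upres] by auto

lemma Tpow_0: "Tpow M T 0 x = x" by (simp add: Tpow_def)

lemma Tpow_Suc: assumes x: "x \<in> space M" shows "Tpow M T (k+1) x = T (Tpow M T k x)"
proof (cases "k \<ge> 0")
  case True
  then have "nat (k+1) = Suc (nat k)" by simp
  then show ?thesis using True by (simp add: Tpow_def)
next
  case False
  show ?thesis
  proof (cases "k = -1")
    case True then show ?thesis using x by (simp add: Tpow_def TU)
  next
    case f2: False
    then have "nat (-k) = Suc (nat (-(k+1)))" using False by simp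
    then have "Tpow M T k x = U (Tpow M T (k+1) x)" using False f2 by (simp add: Tpow_def)
    moreover have "Tpow M T (k+1) x \<in> space M" by (rule Tpow_space[OF x])
    ultimately show ?thesis by (simp add: TU)
  qed
qed

lemma Tpow_pred: assumes x: "x \<in> space M" shows "Tpow M T (k-1) x = U (Tpow M T k x)"
  using Tpow_Suc[OF x, of "k-1"] UT[OF Tpow_space[OF x, of "k-1"]] by simp

lemma Tpow_add: assumes x: "x \<in> space M" shows "Tpow M T (a+b) x = Tpow M T a (Tpow M T b x)"
proof (induction a rule: int_induct[where k=0])
  case base then show ?case by (simp add: Tpow_0)
next
  case (step1 i)
  have "Tpow M T (i+1+b) x = T (Tpow M T (i+b) x)" using Tpow_Suc[OF x, of "i+b"] by (simp add: ac_simps)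
  then show ?case using step1 Tpow_Suc[OF Tpow_space[OF x]] by simp
next
  case (step2 i)
  have "Tpow M T (i-1+b) x = U (Tpow M T (i+b) x)" using Tpow_pred[OF x, of "i+b"] by (simp add: algebra_simps)
  then show ?case using step2 Tpow_pred[OF Tpow_space[OF x]] by simp
qed

lemma Tpow_inv: "x \<in> space M \<Longrightarrow> Tpow M T (-k) (Tpow M T k x) = x"
  using Tpow_add[of x "-k" k] by (simp add: Tpow_0)

lemma Tpow_inj: "inj_on (Tpow M T k) (space M)"
  by (metis Tpow_inv inj_onI)

lemma Tset_eq: assumes "D \<subseteq> space M" shows "Tset M T n D = Tpow M T (-n) -` D \<inter> space M"
proof
  show "Tset M T n D \<subseteq> Tpow M T (- n) -` D \<inter> space M"
    unfolding Tset_def using assms Tpow_inv Tpow_space by (smt (verit, best) IntI image_subset_iff subset_iff vimageI)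
  show "Tpow M T (- n) -` D \<inter> space M \<subseteq> Tset M T n D"
  proof
    fix x assume "x \<in> Tpow M T (- n) -` D \<inter> space M"
    then show "x \<in> Tset M T n D" unfolding Tset_def using Tpow_inv[of x "-n"] by (metis IntE image_eqI minus_minus vimageE)
  qed
qed

lemma Tset_sets: "D \<in> sets M \<Longrightarrow> Tset M T n D \<in> sets M"
  using Tset_eq[OF sets.sets_into_space] Tpow_meas by (metis measurable_sets)

lemma Tset_measure: "D \<in> sets M \<Longrightarrow> measure M (Tset M T n D) = measure M D"
  using Tset_eq[OF sets.sets_into_space] Tpow_pres by metis

lemma Tset_diff: "A \<subseteq> space M \<Longrightarrow> B \<subseteq> space M \<Longrightarrow> Tset M T n (A - B) = Tset M T n A - Tset M T n B"
  unfolding Tset_def by (rule inj_on_image_set_diff[OF Tpow_inj]) auto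

lemma Tset_Int: "A \<subseteq> space M \<Longrightarrow> B \<subseteq> space M \<Longrightarrow> Tset M T n (A \<inter> B) = Tset M T n A \<inter> Tset M T n B"
  unfolding Tset_def by (rule inj_on_image_Int[OF Tpow_inj]) auto

lemma Tset_add: "D \<subseteq> space M \<Longrightarrow> Tset M T (a+b) D = Tset M T a (Tset M T b D)"
  unfolding Tset_def image_comp using Tpow_add by (auto simp: o_def intro!: image_cong)

lemma Tset_space: "D \<subseteq> space M \<Longrightarrow> Tset M T n D \<subseteq> space M"
  unfolding Tset_def using Tpow_space by auto

sublocale prob_space M by (rule probM)

definition sd :: "'a set \<Rightarrow> 'a set \<Rightarrow> 'a set" where "sd X Y = (X - Y) \<union> (Y - X)"

lemma sd_sets: "X \<in> sets M \<Longrightarrow> Y \<in> sets M \<Longrightarrow> sd X Y \<in> sets M"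
  unfolding sd_def by auto

lemma sd_sym: "sd X Y = sd Y X" unfolding sd_def by auto

lemma Tset_sd: "A \<subseteq> space M \<Longrightarrow> B \<subseteq> space M \<Longrightarrow> Tset M T n (sd A B) = sd (Tset M T n A) (Tset M T n B)"
  unfolding sd_def using Tset_diff by (simp add: Tset_def image_Un)

lemma sd_tri: "sd X Z \<subseteq> sd X Y \<union> sd Y Z" unfolding sd_def by auto

lemma null_sub: "X \<subseteq> Y \<union> Z \<Longrightarrow> Y \<in> sets M \<Longrightarrow> Z \<in> sets M \<Longrightarrow> measure M Y = 0 \<Longrightarrow> measure M Z = 0 \<Longrightarrow> measure M X = 0"
  using finite_measure_mono[of X "Y \<union> Z"] measure_Un_le[of Y M Z] measure_nonneg[of M X] by (auto intro: antisym)

lemma Tset_0: "Tset M T 0 A = A" unfolding Tset_def by (simp add: Tpow_0)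

lemma iter_inv:
  assumes A: "A \<in> sets M" and z: "measure M (sd A (Tset M T p A)) = 0"
  shows "measure M (sd A (Tset M T (int k * p) A)) = 0"
proof (induction k)
  case 0 then show ?case by (simp add: Tset_0 sd_def)
next
  case (Suc k)
  have sA: "A \<subseteq> space M" using A sets.sets_into_space by auto
  have B: "Tset M T (int k * p) A \<in> sets M" using Tset_sets A by auto
  have eq: "Tset M T (int (Suc k) * p) A = Tset M T p (Tset M T (int k * p) A)"
    using Tset_add[OF sA, of p "int k * p"] by (simp add: algebra_simps)
  have "sd A (Tset M T (int (Suc k) * p) A) \<subseteq> sd A (Tset M T p A) \<union> sd (Tset M T p A) (Tset M T p (Tset M T (int k * p) A))"
    unfolding eq by (rule sd_tri)
  moreover have "sd (Tset M T p A) (Tset M T p (Tset M T (int k * p) A)) = Tset M T p (sd A (Tset M T (int k * p) A))"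
    using Tset_sd[OF sA Tset_space[OF sA]] by simp
  moreover have "measure M (Tset M T p (sd A (Tset M T (int k * p) A))) = 0"
    using Tset_measure[OF sd_sets[OF A B]] Suc by simp
  ultimately show ?case using null_sub z sd_sets A B Tset_sets by (metis)
qed

lemma Int_full: assumes A: "A \<in> sets M" and X: "X \<in> sets M" and z: "measure M (sd A X) = 0"
  shows "measure M (A \<inter> X) = measure M A"
proof -
  have "measure M (A - (A \<inter> X)) = measure M A - measure M (A \<inter> X)"
    using finite_measure_Diff A X by auto
  moreover have "measure M (A - (A \<inter> X)) \<le> measure M (sd A X)"
    using finite_measure_mono[of "A - (A \<inter> X)" "sd A X"] sd_sets[OF A X] unfolding sd_def by auto
  ultimately show ?thesis using z measure_nonneg[of M "A - (A \<inter> X)"] by linarith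
qed

lemma preimage_Tset: "A \<subseteq> space M \<Longrightarrow> (T ^^ n) -` A \<inter> space M = Tset M T (- int n) A"
  using Tset_eq[of A "- int n"] by (simp add: Tpow_def)

end


lemma wm_contra:
  fixes g :: "nat \<Rightarrow> real" and q :: nat
  assumes q: "0 < q" and a: "0 < a" and g0: "\<And>n. 0 \<le> g n" and ga: "\<And>k. g (k * q) = a"
    and lim: "(\<lambda>N. (\<Sum>n<N. g n) / real N) \<longlonglongrightarrow> 0"
  shows False
proof -
  have sm: "strict_mono (\<lambda>K. q * K)" using q by (simp add: strict_mono_def)
  have l2: "(\<lambda>K. (\<Sum>n<q*K. g n) / real (q*K)) \<longlonglongrightarrow> 0"
    using LIMSEQ_subseq_LIMSEQ[OF lim sm] by (simp add: o_def)
  have pos: "0 < a / real q" using a q by simp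
  from order_tendstoD(2)[OF l2 pos] obtain K0 where
    K0: "\<And>K. K \<ge> K0 \<Longrightarrow> (\<Sum>n<q*K. g n) / real (q*K) < a / real q"
    by (auto simp: eventually_sequentially)
  define K where "K = Suc K0"
  have "(\<Sum>k<K. g (k*q)) = (\<Sum>n\<in>(\<lambda>k. k*q) ` {..<K}. g n)"
    using q by (subst sum.reindex) (auto simp: inj_on_def)
  also have "\<dots> \<le> (\<Sum>n<q*K. g n)"
  proof (rule sum_mono2)
    show "(\<lambda>k. k * q) ` {..<K} \<subseteq> {..<q * K}" using q by (auto simp: mult.commute)
  qed (auto simp: g0)
  finally have "real K * a \<le> (\<Sum>n<q*K. g n)" using ga by simp
  moreover have "(\<Sum>n<q*K. g n) / real (q*K) < a / real q" using K0[of K] K_def by simp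
  moreover have "0 < real (q*K)" using q K_def by (simp del: of_nat_mult)
  ultimately have "real K * a / real (q*K) < a / real q" by (smt (verit) divide_right_mono)
  moreover have "real K * a / real (q*K) = a / real q"
  proof -
    have "real K > 0" using K_def by simp
    then show ?thesis using q by (simp add: field_simps)
  qed
  ultimately show False by simp
qed



context imps begin

lemma no_inv:
  assumes A: "A \<in> sets M" and a0: "0 < measure M A" and a1: "measure M A < 1"
    and wm: "weak_mixing M T" and p: "p \<noteq> 0" and z: "measure M (sd A (Tset M T p A)) = 0"
  shows False
proof -
  have sA: "A \<subseteq> space M" using A sets.sets_into_space by auto
  define q where "q = nat \<bar>p\<bar>"
  have q: "0 < q" using p q_def by simp
  have z': "measure M (sd A (Tset M T (- int q) A)) = 0"
  proof (cases "p < 0")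
    case True then show ?thesis using z q_def by simp
  next
    case False
    then have pq: "- int q = - p" using q_def by simp
    have "Tset M T (-p) (sd A (Tset M T p A)) = sd (Tset M T (-p) A) A"
      using Tset_sd[OF sA Tset_space[OF sA]] Tset_add[OF sA, of "-p" p] by (simp add: Tset_0)
    moreover have "measure M (Tset M T (-p) (sd A (Tset M T p A))) = 0"
      using Tset_measure[OF sd_sets[OF A Tset_sets[OF A]]] z by simp
    ultimately show ?thesis using pq sd_sym by metis
  qed
  define a where "a = measure M A - measure M A * measure M A"
  have apos: "0 < a" using a0 a1 unfolding a_def by (simp add: algebra_simps mult_strict_left_mono)
  define g where "g n = \<bar>measure M (A \<inter> ((T ^^ n) -` A \<inter> space M)) - measure M A * measure M A\<bar>" for n
  have "g (k * q) = a" for k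
  proof -
    have e: "(T ^^ (k*q)) -` A \<inter> space M = Tset M T (int k * (- int q)) A"
      using preimage_Tset[OF sA, of "k*q"] by simp
    have "measure M (A \<inter> Tset M T (int k * (- int q)) A) = measure M A"
      using Int_full[OF A Tset_sets[OF A] iter_inv[OF A z']] .
    then show ?thesis unfolding g_def e a_def using apos a_def by simp
  qed
  moreover have "(\<lambda>N. (\<Sum>n<N. g n) / real N) \<longlonglongrightarrow> 0"
    using wm A unfolding weak_mixing_def g_def by blast
  ultimately show False using wm_contra[OF q apos, of g] g_def by simp
qed

lemma D_pos:
  assumes A: "A \<in> sets M" and a0: "0 < measure M A" and a1: "measure M A < 1"
    and wm: "weak_mixing M T" and m: "m \<noteq> 0"
  shows "0 < measure M (A \<inter> Tset M T m (space M - A))"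
proof (rule ccontr)
  define D where "D = A \<inter> Tset M T m (space M - A)"
  assume "\<not> 0 < measure M (A \<inter> Tset M T m (space M - A))"
  then have D0: "measure M D = 0" using measure_nonneg[of M D] unfolding D_def by linarith
  have sA: "A \<subseteq> space M" using A sets.sets_into_space by auto
  have cA: "space M - A \<in> sets M" using A by auto
  have D: "D \<in> sets M" unfolding D_def using A Tset_sets[OF cA] by auto
  have TA: "Tset M T m A \<in> sets M" using Tset_sets[OF A] .
  have sub: "A - Tset M T m A \<subseteq> D"
  proof
    fix x assume x: "x \<in> A - Tset M T m A"
    define y where "y = Tpow M T (-m) x"
    have xs: "x \<in> space M" using x sA by auto
    have xy: "x = Tpow M T m y" unfolding y_def using Tpow_inv[OF xs, of "-m"] by simp
    have ys: "y \<in> space M" unfolding y_def using Tpow_space[OF xs] .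
    have "y \<notin> A" using x xy unfolding Tset_def by auto
    then show "x \<in> D" unfolding D_def Tset_def using x xy ys by auto
  qed
  have n1: "measure M (A - Tset M T m A) = 0"
    using finite_measure_mono[OF sub D] D0 measure_nonneg[of M "A - Tset M T m A"] by linarith
  have e1: "measure M (A - (A \<inter> Tset M T m A)) = measure M A - measure M (A \<inter> Tset M T m A)"
    using finite_measure_Diff A TA by auto
  have e2: "measure M (Tset M T m A - (A \<inter> Tset M T m A)) = measure M (Tset M T m A) - measure M (A \<inter> Tset M T m A)"
    using finite_measure_Diff A TA by auto
  have "A - (A \<inter> Tset M T m A) = A - Tset M T m A" "Tset M T m A - (A \<inter> Tset M T m A) = Tset M T m A - A" by auto
  then have n2: "measure M (Tset M T m A - A) = 0" using e1 e2 n1 Tset_measure[OF A] by simp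
  have "measure M (sd A (Tset M T m A)) = 0"
    using null_sub[of "sd A (Tset M T m A)" "A - Tset M T m A" "Tset M T m A - A"] n1 n2 A TA
    unfolding sd_def by auto
  then show False using no_inv[OF A a0 a1 wm m] by simp
qed

end


theorem lemma4p1:
  fixes M :: "'a measure" and T :: "'a \<Rightarrow> 'a" and S :: "int set" and m :: int
  assumes "inv_mps M T"
    and "nontrivial_sys M"
    and "weak_mixing M T"
    and "set_of_rigidity M T S"
    and "m \<noteq> 0"
  shows "\<not> set_of_strong_recurrence M T ((\<lambda>n. n + m) ` S)"
proof
  interpret imps M T by (rule imps.intro) (rule assms(1))
  assume sr: "set_of_strong_recurrence M T ((\<lambda>n. n + m) ` S)"
  obtain A where A: "A \<in> sets M" and a0: "0 < measure M A" and a1: "measure M A < 1"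
    using assms(2) unfolding nontrivial_sys_def by auto
  define D where "D = A \<inter> Tset M T m (space M - A)"
  have sA: "A \<subseteq> space M" using A sets.sets_into_space by auto
  have cA: "space M - A \<in> sets M" using A by auto
  have D: "D \<in> sets M" unfolding D_def using A Tset_sets[OF cA] by auto
  have sD: "D \<subseteq> space M" using sA D_def by auto
  have Dpos: "0 < measure M D" unfolding D_def by (rule D_pos[OF A a0 a1 assms(3) assms(5)])
  obtain c where c: "c > 0" and inf: "infinite {k\<in>(\<lambda>n. n + m) ` S. measure M (D \<inter> Tset M T k D) > c}"
    using sr D Dpos unfolding set_of_strong_recurrence_def by blast
  have fin: "finite {n\<in>S. measure M (D - Tset M T n D \<union> (Tset M T n D - D)) > c}"
    using assms(4) D c unfolding set_of_rigidity_def by blast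
  have disj: "D \<inter> Tset M T m D = {}"
  proof -
    have "Tset M T m D \<subseteq> Tset M T m A" unfolding Tset_def D_def by auto
    moreover have "Tset M T m A \<inter> Tset M T m (space M - A) = {}"
    proof -
      have "Tset M T m (A \<inter> (space M - A)) = {}" by (simp add: Tset_def)
      then show ?thesis using Tset_Int[OF sA, of "space M - A" m] by simp
    qed
    ultimately show ?thesis unfolding D_def by auto
  qed
  have "{k\<in>(\<lambda>n. n + m) ` S. measure M (D \<inter> Tset M T k D) > c}
      \<subseteq> (\<lambda>n. n + m) ` {n\<in>S. measure M (D - Tset M T n D \<union> (Tset M T n D - D)) > c}"
  proof
    fix k assume k: "k \<in> {k\<in>(\<lambda>n. n + m) ` S. measure M (D \<inter> Tset M T k D) > c}"
    then obtain n where n: "n \<in> S" and kn: "k = n + m" by auto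
    have TnD: "Tset M T n D \<in> sets M" using Tset_sets[OF D] .
    have e: "Tset M T k D = Tset M T m (Tset M T n D)" using Tset_add[OF sD, of m n] kn by (simp add: add.commute)
    have "D \<inter> Tset M T k D \<subseteq> Tset M T m (Tset M T n D) - Tset M T m D" using disj e by auto
    also have "\<dots> = Tset M T m (Tset M T n D - D)" using Tset_diff[OF Tset_space[OF sD] sD] by simp
    finally have "measure M (D \<inter> Tset M T k D) \<le> measure M (Tset M T m (Tset M T n D - D))"
      by (rule finite_measure_mono) (rule Tset_sets, use TnD D in blast)
    also have "\<dots> = measure M (Tset M T n D - D)" by (rule Tset_measure) (use TnD D in blast)
    also have "\<dots> \<le> measure M (D - Tset M T n D \<union> (Tset M T n D - D))"
      by (rule finite_measure_mono) (use TnD D in auto)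
    finally have "measure M (D - Tset M T n D \<union> (Tset M T n D - D)) > c" using k by simp
    then show "k \<in> (\<lambda>n. n + m) ` {n\<in>S. measure M (D - Tset M T n D \<union> (Tset M T n D - D)) > c}"
      using n kn by blast
  qed
  then show False using inf fin finite_subset by blast
qed


end
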